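(* Let $\mathbb{P}$ be a pre-Pawlikowski lattice satisfying $\mathsf{S}_1(\mathbb{V}_1,\mathbb{V}_1)$. Let $(F_n)_{n\in\omega}$ be a sequence of finite subsets of $\mathbb{P}$ such that for every $p\in\mathbb{P}\setminus\{1\}$ there are infinitely many $n$ with $\sup F_n\not\leq p$. Then there are elements $f_n\in F_n$, $n\in\omega$, such that $\sup_{n\in\omega}f_n=1$.
   Context: A lattice is a poset where any two elements have a supremum and an infimum; it is bounded if it has a minimum $0$ and a maximum $1$. A prime element is $q\neq 1$ with: $a\wedge b\leq q$ implies $a\leq q$ or $b\leq q$. Enough prime elements: whenever $a\not\leq b$ there is a prime $q$ with $b\leq q$, $a\not\leq q$. A pre-Pawlikowski lattice is a bounded lattice with enough prime elements. $\mathbb{V}_1$ is the family of subsets $A\subseteq\mathbb{P}$ with $\sup A=1$. $\mathsf{S}_1(\mathbb{V}_1,\mathbb{V}_1)$ means: for every sequence $(A_n)_{n\in\omega}$ of members of $\mathbb{V}_1$ there are $a_n\in A_n$ with $\sup\{a_n:n\in\omega\}=1$. For a finite set $F$, $\sup F$ denotes its join. *)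

theory Defs
  imports Main
begin

definition prime_elem :: "'a::bounded_lattice \<Rightarrow> bool" where
  "prime_elem q \<longleftrightarrow> q \<noteq> top \<and> (\<forall>a b. inf a b \<le> q \<longrightarrow> a \<le> q \<or> b \<le> q)"

definition enough_primes :: "'a::bounded_lattice itself \<Rightarrow> bool" where
  "enough_primes _ \<longleftrightarrow>
     (\<forall>a b::'a. \<not> a \<le> b \<longrightarrow> (\<exists>q. prime_elem q \<and> b \<le> q \<and> \<not> a \<le> q))"

text \<open>sup A = 1 (for a possibly infinite A in a not necessarily complete lattice):
  1 is the least upper bound of A, i.e. the only upper bound of A is 1.\<close>
definition sup_is_top :: "'a::bounded_lattice set \<Rightarrow> bool" where
  "sup_is_top A \<longleftrightarrow> (\<forall>u. (\<forall>a\<in>A. a \<le> u) \<longrightarrow> u = top)"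

definition V1 :: "'a::bounded_lattice set set" where
  "V1 = {A. sup_is_top A}"

definition S1_V1_V1 :: "'a::bounded_lattice itself \<Rightarrow> bool" where
  "S1_V1_V1 _ \<longleftrightarrow>
     (\<forall>A :: nat \<Rightarrow> 'a set. (\<forall>n. A n \<in> V1) \<longrightarrow>
        (\<exists>a. (\<forall>n. a n \<in> A n) \<and> range a \<in> V1))"

definition fin_sup :: "'a::bounded_lattice set \<Rightarrow> 'a" where
  "fin_sup F = Finite_Set.fold sup bot F"

end

theory Submission
  imports Defs
begin

lemma fin_sup_le:
  fixes F :: "'a::bounded_lattice set"
  assumes "finite F" "\<forall>x\<in>F. x \<le> q"
  shows "fin_sup F \<le> q"
  using assms
proof (induction F rule: finite_induct)
  case empty
  then show ?case by (simp add: fin_sup_def)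
next
  case (insert x F)
  interpret comp_fun_idem "sup :: 'a \<Rightarrow> 'a \<Rightarrow> 'a" by standard (auto simp: fun_eq_iff sup_left_commute)
  have "fin_sup (insert x F) = sup x (fin_sup F)"
    unfolding fin_sup_def using insert.hyps by (simp add: fold_insert_idem)
  then show ?case using insert by simp
qed

lemma lowerb:
  fixes h :: "nat \<Rightarrow> 'a::bounded_lattice"
  assumes "finite J" "prime_elem q" "\<forall>n\<in>J. \<not> h n \<le> q"
  shows "\<exists>x. (\<forall>n\<in>J. x \<le> h n) \<and> \<not> x \<le> q"
  using assms
proof (induction J rule: finite_induct)
  case empty
  then show ?case by (rule_tac x=top in exI) (auto simp: prime_elem_def top.extremum_unique)
next
  case (insert m J)
  then obtain x where x: "\<forall>n\<in>J. x \<le> h n" "\<not> x \<le> q" by auto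
  have "\<not> inf x (h m) \<le> q" using x(2) insert.prems unfolding prime_elem_def by auto
  then show ?case using x(1) by (rule_tac x="inf x (h m)" in exI) (auto intro: le_infI1)
qed

theorem lemma2p3:
  fixes F :: "nat \<Rightarrow> 'a::bounded_lattice set"
  assumes "enough_primes TYPE('a)"
    and "S1_V1_V1 TYPE('a)"
    and "\<And>n. finite (F n)"
    and "\<And>n. F n \<noteq> {}"
    and "\<And>p::'a. p \<noteq> top \<Longrightarrow> infinite {n. \<not> fin_sup (F n) \<le> p}"
  shows "\<exists>f. (\<forall>n. f n \<in> F n) \<and> range f \<in> V1"
proof -
  have sup_top: "S \<in> V1" if H: "\<And>q. prime_elem q \<Longrightarrow> \<exists>x\<in>S. \<not> x \<le> q" for S :: "'a set"
    unfolding V1_def sup_is_top_def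
  proof (clarify, rule ccontr)
    fix u assume ub: "\<forall>a\<in>S. a \<le> u" and nt: "u \<noteq> top"
    have "\<not> top \<le> u" using nt top.extremum_unique by blast
    then obtain q where q: "prime_elem q" "u \<le> q" "\<not> top \<le> q"
      using assms(1) unfolding enough_primes_def by blast
    then obtain x where "x \<in> S" "\<not> x \<le> q" using H by blast
    then show False using ub q(2) order_trans by blast
  qed
  define E where "E k = {x. \<exists>J g. finite J \<and> k < card J \<and> (\<forall>n\<in>J. g n \<in> F n \<and> x \<le> g n)}" for k
  have EV: "E k \<in> V1" for k
  proof (rule sup_top)
    fix q :: 'a assume q: "prime_elem q"
    hence "q \<noteq> top" by (simp add: prime_elem_def)
    hence "infinite {n. \<not> fin_sup (F n) \<le> q}" by (rule assms(5))
    then obtain J where J: "J \<subseteq> {n. \<not> fin_sup (F n) \<le> q}" "finite J" "card J = Suc k"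
      using infinite_arbitrarily_large by blast
    have "\<forall>n\<in>J. \<exists>x\<in>F n. \<not> x \<le> q"
      using J(1) fin_sup_le assms(3) by blast
    then obtain h where h: "\<forall>n\<in>J. h n \<in> F n \<and> \<not> h n \<le> q" by metis
    then obtain x where x: "\<forall>n\<in>J. x \<le> h n" "\<not> x \<le> q"
      using lowerb[OF J(2) q] by blast
    have "x \<in> E k" unfolding E_def using J(2,3) h x(1) by (intro CollectI exI[of _ J] exI[of _ h]) auto
    then show "\<exists>x\<in>E k. \<not> x \<le> q" using x(2) by blast
  qed
  obtain e where e: "\<forall>k. e k \<in> E k" "range e \<in> V1"
    using assms(2) EV unfolding S1_V1_V1_def by blast
  have "\<forall>k. \<exists>J g. finite J \<and> k < card J \<and> (\<forall>n\<in>J. g n \<in> F n \<and> e k \<le> g n)"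
    using e(1) unfolding E_def by blast
  then obtain J G where JG: "\<And>k. finite (J k)" "\<And>k. k < card (J k)"
    "\<And>k n. n \<in> J k \<Longrightarrow> G k n \<in> F n \<and> e k \<le> G k n"
    by metis
  define c where "c k X = (SOME n. n \<in> J k \<and> n \<notin> X)" for k and X :: "nat set"
  define R where "R = rec_nat {} (\<lambda>k X. insert (c k X) X)"
  have R0: "R 0 = {}" and RS: "R (Suc k) = insert (c k (R k)) (R k)" for k
    by (simp_all add: R_def)
  have Rfin: "finite (R k) \<and> card (R k) \<le> k" for k
  proof (induction k)
    case 0 then show ?case by (simp add: R0)
  next
    case (Suc k) then show ?case by (simp add: RS card_insert_if)
  qed
  define r where "r k = c k (R k)" for k
  have rJ: "r k \<in> J k \<and> r k \<notin> R k" for k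
  proof -
    have "\<not> J k \<subseteq> R k"
    proof
      assume "J k \<subseteq> R k"
      hence "card (J k) \<le> card (R k)" using Rfin card_mono by blast
      thus False using Rfin[of k] JG(2)[of k] by simp
    qed
    hence "\<exists>n. n \<in> J k \<and> n \<notin> R k" by blast
    thus ?thesis unfolding r_def c_def by (rule someI_ex)
  qed
  have rR: "i < k \<Longrightarrow> r i \<in> R k" for i k
  proof (induction k)
    case 0 then show ?case by simp
  next
    case (Suc k) then show ?case by (auto simp: RS r_def less_Suc_eq)
  qed
  have injr: "inj r"
  proof (rule injI)
    fix i k assume eq: "r i = r k"
    show "i = k"
    proof (rule ccontr)
      assume "i \<noteq> k"
      hence "i < k \<or> k < i" by arith
      thus False using rR rJ eq by metis
    qed
  qed
  define f where "f n = (if n \<in> range r then G (inv r n) n else (SOME x. x \<in> F n))" for n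
  have fr: "f (r k) = G k (r k)" for k
    unfolding f_def using injr by simp
  have fF: "f n \<in> F n" for n
  proof (cases "n \<in> range r")
    case True
    then obtain k where "n = r k" by blast
    then show ?thesis using fr rJ JG(3) by simp
  next
    case False
    then show ?thesis unfolding f_def using assms(4) by (simp add: some_in_eq)
  qed
  have "range f \<in> V1"
    unfolding V1_def sup_is_top_def
  proof clarify
    fix u assume ub: "\<forall>a\<in>range f. a \<le> u"
    have "\<forall>a\<in>range e. a \<le> u"
    proof
      fix a assume "a \<in> range e"
      then obtain k where "a = e k" by blast
      have "e k \<le> G k (r k)" using JG(3) rJ by blast
      also have "\<dots> = f (r k)" by (simp add: fr)
      also have "\<dots> \<le> u" using ub by simp
      finally show "a \<le> u" using \<open>a = e k\<close> by simp
    qed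
    then show "u = top" using e(2) unfolding V1_def sup_is_top_def by blast
  qed
  then show ?thesis using fF by blast
qed

end
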